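(* Let $\mathcal N$ be a fully connected feed-forward ReLU network with $d$ hidden layers. For all $\theta$ outside a Lebesgue-null subset of $\mathbb R^{\#\mathrm{params}}$ the following holds: whenever $\mathcal A_1\neq\mathcal A_2$ are activation patterns with $\mathcal R(\mathcal A_1;\theta)\neq\emptyset$ and $\mathcal R(\mathcal A_2;\theta)\neq\emptyset$, and such that for each $j\in\{1,2\}$ and each hidden layer there is a neuron $z$ in that layer with $a_{j,z}=1$, the (constant) value of $\nabla\mathcal N(x;\theta)$ for $x$ in $\mathcal R(\mathcal A_1;\theta)$ differs from its value for $x$ in $\mathcal R(\mathcal A_2;\theta)$.
   Context: A fully connected feed-forward ReLU network $\mathcal N$ with input dimension $n_{\mathrm{in}}$ and output dimension $1$ has hidden layers $1,\dots,d$, every neuron of layer $\ell-1$ (or every input coordinate, for $\ell=1$) joined to every neuron of layer $\ell$, each edge carrying its own weight. A neuron $z$ in layer $1$ has pre-activation $z(x;\theta)=\sum_i w_{z,i}x_i$; a neuron $z$ in layer $\ell\ge2$ has pre-activation $z(x;\theta)=\sum_{z'}w_{z,z'}\max\{0,z'(x;\theta)-b_{z'}\}$; $b_z$ is its bias. The output is $\mathcal N(x;\theta)=\sum_z w_z\max\{0,z(x;\theta)-b_z\}-b_{\mathrm{out}}$ over neurons of layer $d$. $\theta$ is the vector of all weights and biases. An activation pattern is $\mathcal A_j=\{a_{j,z}\}\in\{-1,1\}^{\#\mathrm{neurons}}$, with activation region $\mathcal R(\mathcal A_j;\theta)=\{x:\ \mathrm{sgn}(z(x;\theta)-b_z)=a_{j,z}\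 \forall z\}$; $\mathcal N(\cdot;\theta)$ is affine on each activation region. *)

theory Defs
  imports "HOL-Analysis.Analysis"
begin

text \<open>Architecture: input space real^'n (input dimension CARD('n)); hidden layer widths
  given by the list ws: hidden layer l (1 \<le> l \<le> length ws) has neurons 0..<ws!(l-1).\<close>

datatype 'n prm =
    Win nat 'n          \<comment> \<open>weight from input coordinate j to neuron i of layer 1\<close>
  | W nat nat nat       \<comment> \<open>W l i k: weight from neuron k of layer l-1 to neuron i of layer l (l \<ge> 2)\<close>
  | B nat nat
  | Wout nat
  | Bout

definition params :: "nat list \<Rightarrow> ('n::finite) prm set" where
  "params ws =
     {Win i j | i j. i < ws ! 0}
   \<union> {W l i k | l i k. 2 \<le> l \<and> l \<le> length ws \<and> i < ws ! (l - 1) \<and> k < ws ! (l - 2)}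
   \<union> {B l i | l i. 1 \<le> l \<and> l \<le> length ws \<and> i < ws ! (l - 1)}
   \<union> {Wout k | k. k < ws ! (length ws - 1)}
   \<union> {Bout}"

definition neurons :: "nat list \<Rightarrow> (nat \<times> nat) set" where
  "neurons ws = {(l, i). 1 \<le> l \<and> l \<le> length ws \<and> i < ws ! (l - 1)}"

fun preact :: "nat list \<Rightarrow> (('n::finite) prm \<Rightarrow> real) \<Rightarrow> nat \<Rightarrow> nat \<Rightarrow> real^'n \<Rightarrow> real" where
  "preact ws \<theta> 0 i x = 0"
| "preact ws \<theta> (Suc 0) i x = (\<Sum>j\<in>UNIV. \<theta> (Win i j) * x $ j)"
| "preact ws \<theta> (Suc (Suc l)) i x =
     (\<Sum>k<ws ! l. \<theta> (W (Suc (Suc l)) i k) * max 0 (preact ws \<theta> (Suc l) k x - \<theta> (B (Suc l) k)))"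

definition net :: "nat list \<Rightarrow> (('n::finite) prm \<Rightarrow> real) \<Rightarrow> real^'n \<Rightarrow> real" where
  "net ws \<theta> x =
     (\<Sum>k<ws ! (length ws - 1).
        \<theta> (Wout k) * max 0 (preact ws \<theta> (length ws) k x - \<theta> (B (length ws) k))) - \<theta> Bout"

definition patterns :: "nat list \<Rightarrow> (nat \<times> nat \<Rightarrow> real) set" where
  "patterns ws = (neurons ws \<rightarrow>\<^sub>E {-1, 1})"

definition region :: "nat list \<Rightarrow> (('n::finite) prm \<Rightarrow> real) \<Rightarrow> (nat \<times> nat \<Rightarrow> real) \<Rightarrow> (real^'n) set" where
  "region ws \<theta> A = {x. \<forall>(l, i)\<in>neurons ws. sgn (preact ws \<theta> l i x - \<theta> (B l i)) = A (l, i)}"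

definition active_every_layer :: "nat list \<Rightarrow> (nat \<times> nat \<Rightarrow> real) \<Rightarrow> bool" where
  "active_every_layer ws A = (\<forall>l\<in>{1..length ws}. \<exists>i < ws ! (l - 1). A (l, i) = 1)"

end

theory Submission
  imports Defs
begin



lemma max0_deriv_pos:
  fixes f :: "real^'n \<Rightarrow> real"
  assumes d: "(f has_derivative f') (at x)" and p: "f x > 0"
  shows "((\<lambda>y. max 0 (f y)) has_derivative f') (at x)"
proof -
  have "(f \<longlongrightarrow> f x) (at x)" using has_derivative_continuous[OF d] by (simp add: continuous_at)
  then have "\<forall>\<^sub>F y in at x. f y > 0" using p by (simp add: order_tendstoD(1))
  then have "\<forall>\<^sub>F y in at x. f y = max 0 (f y)" by (rule eventually_mono) auto
  then show ?thesis using has_derivative_transform_eventually[OF d] p by auto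
qed

lemma max0_deriv_neg:
  fixes f :: "real^'n \<Rightarrow> real"
  assumes d: "(f has_derivative f') (at x)" and p: "f x < 0"
  shows "((\<lambda>y. max 0 (f y)) has_derivative (\<lambda>h. 0)) (at x)"
proof -
  have "(f \<longlongrightarrow> f x) (at x)" using has_derivative_continuous[OF d] by (simp add: continuous_at)
  then have "\<forall>\<^sub>F y in at x. f y < 0" using p by (simp add: order_tendstoD(2))
  then have "\<forall>\<^sub>F y in at x. (\<lambda>_. 0) y = max 0 (f y)" by (rule eventually_mono) auto
  moreover have "((\<lambda>_. 0::real) has_derivative (\<lambda>h. 0)) (at x)" by simp
  ultimately show ?thesis using has_derivative_transform_eventually[where f="\<lambda>_. 0" and g="\<lambda>y. max 0 (f y)"] p by auto
qed

fun G :: "nat list \<Rightarrow> (nat \<times> nat \<Rightarrow> real) \<Rightarrow> (('n::finite) prm \<Rightarrow> real) \<Rightarrow> nat \<Rightarrow> nat \<Rightarrow> 'n \<Rightarrow> real" where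
  "G ws A \<theta> 0 i j = 0"
| "G ws A \<theta> (Suc 0) i j = \<theta> (Win i j)"
| "G ws A \<theta> (Suc (Suc l)) i j =
     (\<Sum>k<ws ! l. \<theta> (W (Suc (Suc l)) i k) * (if A (Suc l, k) = 1 then G ws A \<theta> (Suc l) k j else 0))"

definition gnet :: "nat list \<Rightarrow> (nat \<times> nat \<Rightarrow> real) \<Rightarrow> (('n::finite) prm \<Rightarrow> real) \<Rightarrow> 'n \<Rightarrow> real" where
  "gnet ws A \<theta> j = (\<Sum>k<ws ! (length ws - 1). \<theta> (Wout k) * (if A (length ws, k) = 1 then G ws A \<theta> (length ws) k j else 0))"

lemma region_sign:
  assumes x: "x \<in> region ws \<theta> A" and A: "A \<in> patterns ws" and n: "1 \<le> l" "l \<le> length ws" "i < ws ! (l - 1)"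
  shows "(A (l,i) = 1 \<longrightarrow> preact ws \<theta> l i x - \<theta> (B l i) > 0) \<and> (A (l,i) \<noteq> 1 \<longrightarrow> preact ws \<theta> l i x - \<theta> (B l i) < 0)"
proof -
  have nn: "(l,i) \<in> neurons ws" using n by (simp add: neurons_def)
  then have s: "sgn (preact ws \<theta> l i x - \<theta> (B l i)) = A (l, i)" using x unfolding region_def by auto
  have "A (l,i) \<in> {-1,1}" using A nn unfolding patterns_def by auto
  then show ?thesis using s by (auto simp: sgn_if split: if_splits)
qed

lemma preact_deriv_aux:
  fixes \<theta> :: "('n::finite) prm \<Rightarrow> real"
  assumes x: "x \<in> region ws \<theta> A" and A: "A \<in> patterns ws"
  shows "\<forall>i. Suc l \<le> length ws \<longrightarrow> i < ws ! l \<longrightarrow>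
    (preact ws \<theta> (Suc l) i has_derivative (\<lambda>h. \<Sum>j\<in>UNIV. G ws A \<theta> (Suc l) i j * h $ j)) (at x)"
proof (induction l)
  case 0
  show ?case
    by (auto intro!: derivative_eq_intros bounded_linear.has_derivative[OF bounded_linear_vec_nth])
next
  case (Suc l)
  show ?case
  proof (intro allI impI)
    fix i assume L: "Suc (Suc l) \<le> length ws" and i: "i < ws ! Suc l"
    have tk: "((\<lambda>y. \<theta> (W (Suc (Suc l)) i k) * max 0 (preact ws \<theta> (Suc l) k y - \<theta> (B (Suc l) k)))
       has_derivative (\<lambda>h. \<theta> (W (Suc (Suc l)) i k) * (if A (Suc l, k) = 1 then (\<Sum>j\<in>UNIV. G ws A \<theta> (Suc l) k j * h $ j) else 0))) (at x)"
      if k: "k < ws ! l" for k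
    proof -
      have d: "(preact ws \<theta> (Suc l) k has_derivative (\<lambda>h. \<Sum>j\<in>UNIV. G ws A \<theta> (Suc l) k j * h $ j)) (at x)"
        using Suc.IH L k by auto
      then have d': "((\<lambda>y. preact ws \<theta> (Suc l) k y - \<theta> (B (Suc l) k)) has_derivative (\<lambda>h. \<Sum>j\<in>UNIV. G ws A \<theta> (Suc l) k j * h $ j)) (at x)"
        by (auto intro!: derivative_eq_intros)
      have sg: "(A (Suc l,k) = 1 \<longrightarrow> preact ws \<theta> (Suc l) k x - \<theta> (B (Suc l) k) > 0) \<and> (A (Suc l,k) \<noteq> 1 \<longrightarrow> preact ws \<theta> (Suc l) k x - \<theta> (B (Suc l) k) < 0)"
        using region_sign[OF x A, of "Suc l" k] L k by auto
      show ?thesis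
      proof (cases "A (Suc l, k) = 1")
        case True
        then show ?thesis using max0_deriv_pos[OF d'] sg by (auto intro!: has_derivative_mult_right)
      next
        case False
        then show ?thesis using max0_deriv_neg[OF d'] sg
          using has_derivative_mult_right[of "\<lambda>y. max 0 (preact ws \<theta> (Suc l) k y - \<theta> (B (Suc l) k))" "\<lambda>h. 0"]
          by auto
      qed
    qed
    have D1: "((\<lambda>y. \<Sum>k<ws ! l. \<theta> (W (Suc (Suc l)) i k) * max 0 (preact ws \<theta> (Suc l) k y - \<theta> (B (Suc l) k)))
       has_derivative (\<lambda>h. \<Sum>k<ws ! l. \<theta> (W (Suc (Suc l)) i k) * (if A (Suc l, k) = 1 then (\<Sum>j\<in>UNIV. G ws A \<theta> (Suc l) k j * h $ j) else 0))) (at x)"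
      by (rule has_derivative_sum) (use tk in auto)
    moreover have D2: "(\<lambda>h. \<Sum>k<ws ! l. \<theta> (W (Suc (Suc l)) i k) * (if A (Suc l, k) = 1 then (\<Sum>j\<in>UNIV. G ws A \<theta> (Suc l) k j * h $ j) else 0))
       = (\<lambda>h. \<Sum>j\<in>UNIV. G ws A \<theta> (Suc (Suc l)) i j * h $ j)"
      apply (rule ext)
      apply (simp add: sum_distrib_left sum_distrib_right)
      apply (rule trans[OF _ sum.swap])
      apply (rule sum.cong, simp)
      apply (auto simp: sum_distrib_left mult_ac)
      done
    have e: "preact ws \<theta> (Suc (Suc l)) i = (\<lambda>y. \<Sum>k<ws ! l. \<theta> (W (Suc (Suc l)) i k) * max 0 (preact ws \<theta> (Suc l) k y - \<theta> (B (Suc l) k)))"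
      by (rule ext) simp
    show "(preact ws \<theta> (Suc (Suc l)) i has_derivative (\<lambda>h. \<Sum>j\<in>UNIV. G ws A \<theta> (Suc (Suc l)) i j * h $ j)) (at x)"
      unfolding e by (subst D2[symmetric]) (rule D1)
  qed
qed

lemma net_deriv:
  fixes \<theta> :: "('n::finite) prm \<Rightarrow> real"
  assumes x: "x \<in> region ws \<theta> A" and A: "A \<in> patterns ws" and ne: "ws \<noteq> []"
  shows "GDERIV (net ws \<theta>) x :> (\<chi> j. gnet ws A \<theta> j)"
proof -
  define L where "L = length ws"
  obtain l where lL: "L = Suc l" using ne L_def by (cases ws) auto
  have tk: "((\<lambda>y. \<theta> (Wout k) * max 0 (preact ws \<theta> L k y - \<theta> (B L k)))
       has_derivative (\<lambda>h. \<theta> (Wout k) * (if A (L, k) = 1 then (\<Sum>j\<in>UNIV. G ws A \<theta> L k j * h $ j) else 0))) (at x)"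
      if k: "k < ws ! (L - 1)" for k
  proof -
    have d: "(preact ws \<theta> L k has_derivative (\<lambda>h. \<Sum>j\<in>UNIV. G ws A \<theta> L k j * h $ j)) (at x)"
      using preact_deriv_aux[OF x A, of l] lL L_def k by auto
    then have d': "((\<lambda>y. preact ws \<theta> L k y - \<theta> (B L k)) has_derivative (\<lambda>h. \<Sum>j\<in>UNIV. G ws A \<theta> L k j * h $ j)) (at x)"
      by (auto intro!: derivative_eq_intros)
    have sg: "(A (L,k) = 1 \<longrightarrow> preact ws \<theta> L k x - \<theta> (B L k) > 0) \<and> (A (L,k) \<noteq> 1 \<longrightarrow> preact ws \<theta> L k x - \<theta> (B L k) < 0)"
      using region_sign[OF x A, of L k] lL L_def k by auto
    show ?thesis
    proof (cases "A (L, k) = 1")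
      case True
      then show ?thesis using max0_deriv_pos[OF d'] sg by (auto intro!: has_derivative_mult_right)
    next
      case False
      then show ?thesis using max0_deriv_neg[OF d'] sg
        using has_derivative_mult_right[of "\<lambda>y. max 0 (preact ws \<theta> L k y - \<theta> (B L k))" "\<lambda>h. 0"]
        by auto
    qed
  qed
  have D1: "((\<lambda>y. (\<Sum>k<ws ! (L - 1). \<theta> (Wout k) * max 0 (preact ws \<theta> L k y - \<theta> (B L k))) - \<theta> Bout)
       has_derivative (\<lambda>h. (\<Sum>k<ws ! (L-1). \<theta> (Wout k) * (if A (L, k) = 1 then (\<Sum>j\<in>UNIV. G ws A \<theta> L k j * h $ j) else 0)) - 0)) (at x)"
    by (intro has_derivative_diff has_derivative_sum has_derivative_const) (use tk in auto)
  moreover have D2: "(\<lambda>h. (\<Sum>k<ws ! (L-1). \<theta> (Wout k) * (if A (L, k) = 1 then (\<Sum>j\<in>UNIV. G ws A \<theta> L k j * h $ j) else 0)) - 0)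
       = (\<lambda>h. inner h (\<chi> j. gnet ws A \<theta> j))"
      apply (rule ext)
      apply (unfold L_def, simp add: gnet_def inner_vec_def sum_distrib_left sum_distrib_right)
      apply (rule trans[OF _ sum.swap])
      apply (rule sum.cong, simp)
      apply (auto simp: sum_distrib_left mult_ac)
      done
  have e: "net ws \<theta> = (\<lambda>y. (\<Sum>k<ws ! (L - 1). \<theta> (Wout k) * max 0 (preact ws \<theta> L k y - \<theta> (B L k))) - \<theta> Bout)"
    by (rule ext) (simp add: net_def L_def)
  show ?thesis
    unfolding gderiv_def e by (subst D2[symmetric]) (rule D1)
qed




lemma measurable_eval_any:
  "(\<lambda>\<theta>. \<theta> x) \<in> borel_measurable (Pi\<^sub>M P (\<lambda>_. lborel :: real measure))"
proof (cases "x \<in> P")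
  case True then show ?thesis using measurable_component_singleton[of x P "\<lambda>_. lborel :: real measure"] by simp
next
  case False
  have "(\<lambda>\<theta>::'a \<Rightarrow> real. undefined::real) \<in> borel_measurable (Pi\<^sub>M P (\<lambda>_. lborel))" by simp
  then show ?thesis
    by (rule measurable_cong[THEN iffD1, rotated]) (use False in \<open>auto simp: space_PiM PiE_def extensional_def\<close>)
qed

lemma key_lemma:
  fixes P :: "'a set" and c h :: "('a \<Rightarrow> real) \<Rightarrow> real"
  assumes fin: "finite P" and v: "v \<in> P"
    and cm: "c \<in> borel_measurable (Pi\<^sub>M P (\<lambda>_. lborel))"
    and hm: "h \<in> borel_measurable (Pi\<^sub>M P (\<lambda>_. lborel))"
    and ci: "\<And>\<theta> t. c (\<theta>(v := t)) = c \<theta>"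
    and hi: "\<And>\<theta> t. h (\<theta>(v := t)) = h \<theta>"
    and ae: "AE \<theta> in Pi\<^sub>M P (\<lambda>_. lborel). c \<theta> \<noteq> 0"
  shows "AE \<theta> in Pi\<^sub>M P (\<lambda>_. lborel). c \<theta> * \<theta> v + h \<theta> \<noteq> 0"
proof -
  interpret product_sigma_finite "\<lambda>_::'a. lborel :: real measure"
    by (simp add: product_sigma_finite_def lborel.sigma_finite_measure_axioms)
  let ?M = "Pi\<^sub>M P (\<lambda>_. lborel :: real measure)"
  let ?Q = "\<lambda>\<theta>. c \<theta> \<noteq> 0 \<longrightarrow> c \<theta> * \<theta> v + h \<theta> \<noteq> 0"
  have Pv: "P = insert v (P - {v})" using v by auto
  have vm: "(\<lambda>\<theta>. \<theta> v) \<in> borel_measurable ?M" by (rule measurable_eval_any)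
  have sets: "{\<theta> \<in> space ?M. ?Q \<theta>} \<in> sets ?M"
    using cm hm vm by measurable
  have indm: "indicator {\<theta>. \<not> ?Q \<theta>} \<in> borel_measurable ?M"
  proof -
    have "{\<theta> \<in> space ?M. \<not> ?Q \<theta>} \<in> sets ?M" using cm hm vm by measurable
    then have "indicator {\<theta> \<in> space ?M. \<not> ?Q \<theta>} \<in> borel_measurable ?M" by simp
    then show ?thesis
      by (rule measurable_cong[THEN iffD1, rotated]) (auto simp: indicator_def)
  qed
  have inner: "(\<integral>\<^sup>+ y. indicator {\<theta>. \<not> ?Q \<theta>} (x(v := y)) \<partial>lborel) = 0" for x :: "'a \<Rightarrow> real"
  proof -
    have AEz: "AE y in lborel. indicator {\<theta>. \<not> ?Q \<theta>} (x(v := y)) = (0::ennreal)"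
      using AE_lborel_singleton[of "- h x / c x"]
    proof (rule eventually_mono)
      fix y :: real assume y: "y \<noteq> - h x / c x"
      show "indicator {\<theta>. \<not> ?Q \<theta>} (x(v := y)) = (0::ennreal)"
      proof (cases "c x = 0")
        case True then show ?thesis using ci[of x y] by (simp add: indicator_def)
      next
        case False
        have "c x * y + h x \<noteq> 0"
        proof
          assume "c x * y + h x = 0"
          then have "y = - h x / c x" using False by (simp add: field_simps)
          with y show False by simp
        qed
        then show ?thesis using ci[of x y] hi[of x y] by (simp add: indicator_def)
      qed
    qed
    have "(\<integral>\<^sup>+ y. indicator {\<theta>. \<not> ?Q \<theta>} (x(v := y)) \<partial>lborel) = (\<integral>\<^sup>+ y. 0 \<partial>lborel)"
      using nn_integral_cong_AE[OF AEz] by simp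
    then show ?thesis by simp
  qed
  have "integral\<^sup>N ?M (indicator {\<theta>. \<not> ?Q \<theta>}) = 0"
    apply (subst Pv)
    apply (subst product_nn_integral_insert)
    using fin indm Pv inner by auto
  then have "AE \<theta> in ?M. ?Q \<theta>"
    using AE_iff_nn_integral[OF sets] by simp
  with ae show ?thesis by eventually_elim auto
qed




lemma key_sum:
  fixes P :: "'a set" and e :: "'k \<Rightarrow> ('a \<Rightarrow> real) \<Rightarrow> real" and var :: "'k \<Rightarrow> 'a"
  assumes fin: "finite P" and K: "finite K" "kz \<in> K" and v: "var kz \<in> P" and inj: "inj_on var K"
    and em: "\<And>k. k \<in> K \<Longrightarrow> e k \<in> borel_measurable (Pi\<^sub>M P (\<lambda>_. lborel))"
    and ei: "\<And>k \<theta> t. k \<in> K \<Longrightarrow> e k (\<theta>(var kz := t)) = e k \<theta>"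
    and ae: "AE \<theta> in Pi\<^sub>M P (\<lambda>_. lborel). e kz \<theta> \<noteq> 0"
  shows "AE \<theta> in Pi\<^sub>M P (\<lambda>_. lborel). (\<Sum>k\<in>K. \<theta> (var k) * e k \<theta>) \<noteq> 0"
proof -
  define h where "h = (\<lambda>\<theta>::'a\<Rightarrow>real. \<Sum>k\<in>K-{kz}. \<theta> (var k) * e k \<theta>)"
  have eq: "(\<Sum>k\<in>K. \<theta> (var k) * e k \<theta>) = e kz \<theta> * \<theta> (var kz) + h \<theta>" for \<theta>
    unfolding h_def using K by (simp add: sum.remove mult.commute)
  have hm: "h \<in> borel_measurable (Pi\<^sub>M P (\<lambda>_. lborel))"
    unfolding h_def
    by (intro borel_measurable_sum borel_measurable_times measurable_eval_any em) auto
  have hi: "h (\<theta>(var kz := t)) = h \<theta>" for \<theta> t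
  proof -
    have "k \<in> K - {kz} \<Longrightarrow> var k \<noteq> var kz" for k using inj K by (auto dest: inj_onD)
    then show ?thesis unfolding h_def using ei by (intro sum.cong) auto
  qed
  have "AE \<theta> in Pi\<^sub>M P (\<lambda>_. lborel). e kz \<theta> * \<theta> (var kz) + h \<theta> \<noteq> 0"
    by (rule key_lemma[OF fin v em[OF K(2)] hm ei[OF K(2)] hi ae])
  then show ?thesis by (simp add: eq)
qed

lemma G_inv:
  "(m > l \<and> x = W m a b) \<or> x = Wout a \<Longrightarrow> G ws A (\<theta>(x := t)) l i j = G ws A \<theta> l i j"
  by (induction ws A \<theta> l i j rule: G.induct) (auto intro!: sum.cong)

lemma G_inv_W: "l < m \<Longrightarrow> G ws A (\<theta>(W m a b := t)) l i j = G ws A \<theta> l i j"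
  using G_inv by blast
lemma G_inv_Wout: "G ws A (\<theta>(Wout a := t)) l i j = G ws A \<theta> l i j"
  using G_inv by blast
lemma meas_if0: "f \<in> borel_measurable M \<Longrightarrow> (\<lambda>\<theta>. if b then f \<theta> else (0::real)) \<in> borel_measurable M"
  by (cases b) auto

lemma G_meas:
  "(\<lambda>\<theta>. G ws A \<theta> l i j) \<in> borel_measurable (Pi\<^sub>M P (\<lambda>_. lborel))"
proof (induction l arbitrary: i rule: less_induct)
  case (less l)
  show ?case
  proof (cases l)
    case 0 then show ?thesis by simp
  next
    case (Suc l')
    show ?thesis
    proof (cases l')
      case 0 then show ?thesis using Suc by (simp add: measurable_eval_any)
    next
      case (Suc l'')
      have "(\<lambda>\<theta>. G ws A \<theta> (Suc l'') k j) \<in> borel_measurable (Pi\<^sub>M P (\<lambda>_. lborel))" for k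
        using less \<open>l = Suc l'\<close> Suc by auto
      then show ?thesis using \<open>l = Suc l'\<close> Suc
        by (auto intro!: borel_measurable_sum borel_measurable_times measurable_eval_any)
    qed
  qed
qed

lemma params_Win: "i < ws ! 0 \<Longrightarrow> Win i j \<in> params ws"
  by (simp add: params_def)
lemma params_W: "2 \<le> l \<Longrightarrow> l \<le> length ws \<Longrightarrow> i < ws ! (l-1) \<Longrightarrow> k < ws ! (l-2) \<Longrightarrow> W l i k \<in> params ws"
  by (simp add: params_def)
lemma params_Wout: "k < ws ! (length ws - 1) \<Longrightarrow> Wout k \<in> params ws"
  by (simp add: params_def)

lemma finite_params: "finite (params ws)"
proof -
  have 1: "{Win i j | i j. i < ws ! 0} = (\<lambda>(i,j). Win i j) ` ({..<ws!0} \<times> UNIV)" by auto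
  have 2: "{W l i k | l i k. 2 \<le> l \<and> l \<le> length ws \<and> i < ws ! (l - 1) \<and> k < ws ! (l - 2)}
     = (\<lambda>(l,i,k). W l i k) ` (SIGMA l:{2..length ws}. {..<ws!(l-1)} \<times> {..<ws!(l-2)})" by force
  have 3: "{B l i | l i. 1 \<le> l \<and> l \<le> length ws \<and> i < ws ! (l - 1)}
     = (\<lambda>(l,i). B l i) ` (SIGMA l:{1..length ws}. {..<ws!(l-1)})" by force
  have 4: "{Wout k | k. k < ws ! (length ws - 1)} = Wout ` {..<ws ! (length ws - 1)}" by auto
  show ?thesis unfolding params_def 1 2 3 4 by auto
qed

lemma finite_neurons: "finite (neurons ws)"
proof -
  have "neurons ws = (SIGMA l:{1..length ws}. {..<ws!(l-1)})" by (auto simp: neurons_def)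
  then show ?thesis by auto
qed

lemma G_nonzero:
  fixes j :: "'n::finite"
  assumes act: "active_every_layer ws A"
  shows "1 \<le> l \<Longrightarrow> l \<le> length ws \<Longrightarrow> i < ws ! (l - 1) \<Longrightarrow>
    AE \<theta> in Pi\<^sub>M (params ws :: 'n prm set) (\<lambda>_. lborel). G ws A \<theta> l i j \<noteq> 0"
proof (induction l arbitrary: i rule: less_induct)
  case (less l)
  show ?case
  proof (cases l)
    case 0 then show ?thesis using less by simp
  next
    case (Suc l')
    show ?thesis
    proof (cases l')
      case 0
      have "AE \<theta> in Pi\<^sub>M (params ws :: 'n prm set) (\<lambda>_. lborel). (\<lambda>_. 1::real) \<theta> * \<theta> (Win i j) + (\<lambda>_. 0) \<theta> \<noteq> 0"
        using key_lemma[where c="\<lambda>_. 1" and h="\<lambda>_. 0" and P="params ws" and v="Win i j"]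
        using less Suc 0 by (auto simp: finite_params params_Win)
      then show ?thesis using Suc 0 by simp
    next
      case (Suc l'')
      have lS: "l = Suc (Suc l'')" using \<open>l = Suc l'\<close> Suc by simp
      have "Suc l'' \<in> {1..length ws}" using less.prems lS by auto
      then obtain k0 where "k0 < ws ! (Suc l'' - 1)" "A (Suc l'', k0) = 1"
        using act unfolding active_every_layer_def by blast
      then have k0: "k0 < ws ! l''" "A (Suc l'', k0) = 1" by auto
      have "AE \<theta> in Pi\<^sub>M (params ws :: 'n prm set) (\<lambda>_. lborel).
          (\<Sum>k\<in>{..<ws ! l''}. \<theta> (W (Suc (Suc l'')) i k) * (\<lambda>k \<theta>. if A (Suc l'', k) = 1 then G ws A \<theta> (Suc l'') k j else 0) k \<theta>) \<noteq> 0"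
      proof (rule key_sum[where kz=k0])
        show "W (Suc (Suc l'')) i k0 \<in> params ws" using less.prems lS k0 by (intro params_W) auto
        show "inj_on (W (Suc (Suc l'')) i) {..<ws ! l''}" by (auto simp: inj_on_def)
        show "AE \<theta> in Pi\<^sub>M (params ws) (\<lambda>_. lborel).
            (if A (Suc l'', k0) = 1 then G ws A \<theta> (Suc l'') k0 j else 0) \<noteq> 0"
          using less.IH[of "Suc l''" k0] lS less.prems k0 by simp
      qed (auto simp: finite_params k0 G_inv_W G_meas intro!: meas_if0)
      then show ?thesis using lS by simp
    qed
  qed
qed




lemma active_pick:
  assumes "active_every_layer ws A" "1 \<le> l" "l \<le> length ws"
  obtains k where "k < ws ! (l - 1)" "A (l, k) = 1"
proof -
  have "l \<in> {1..length ws}" using assms by auto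
  then show ?thesis using assms(1) that unfolding active_every_layer_def by blast
qed

lemma G_diff:
  fixes j :: "'n::finite"
  assumes act1: "active_every_layer ws A1" and act2: "active_every_layer ws A2"
  shows "1 \<le> l \<Longrightarrow> l \<le> length ws \<Longrightarrow> i < ws ! (l - 1) \<Longrightarrow>
    (\<exists>m k. 1 \<le> m \<and> m < l \<and> k < ws ! (m - 1) \<and> (A1 (m,k) = 1) \<noteq> (A2 (m,k) = 1)) \<Longrightarrow>
    AE \<theta> in Pi\<^sub>M (params ws :: 'n prm set) (\<lambda>_. lborel). G ws A1 \<theta> l i j - G ws A2 \<theta> l i j \<noteq> 0"
proof (induction l arbitrary: i rule: less_induct)
  case (less l)
  obtain l'' where lS: "l = Suc (Suc l'')"
    using less.prems by (metis Suc_le_eq Suc_lessE less_one not_less0 le_neq_implies_less less_imp_le_nat Suc_le_mono le_SucE)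
  define e where "e = (\<lambda>k (\<theta>::'n prm \<Rightarrow> real). (if A1 (Suc l'', k) = 1 then G ws A1 \<theta> (Suc l'') k j else 0)
       - (if A2 (Suc l'', k) = 1 then G ws A2 \<theta> (Suc l'') k j else 0))"
  have eq: "G ws A1 \<theta> l i j - G ws A2 \<theta> l i j = (\<Sum>k\<in>{..<ws ! l''}. \<theta> (W (Suc (Suc l'')) i k) * e k \<theta>)" for \<theta>
    unfolding lS e_def by (simp add: sum_subtractf[symmetric] right_diff_distrib)
  have lay: "1 \<le> Suc l''" "Suc l'' \<le> length ws" using less.prems lS by auto
  have cK: "AE \<theta> in Pi\<^sub>M (params ws :: 'n prm set) (\<lambda>_. lborel). e k0 \<theta> \<noteq> 0 \<Longrightarrow> k0 < ws ! l'' \<Longrightarrow>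
     AE \<theta> in Pi\<^sub>M (params ws :: 'n prm set) (\<lambda>_. lborel). (\<Sum>k\<in>{..<ws ! l''}. \<theta> (W (Suc (Suc l'')) i k) * e k \<theta>) \<noteq> 0" for k0
  proof (rule key_sum[where kz=k0])
    assume "k0 < ws ! l''"
    then show "W (Suc (Suc l'')) i k0 \<in> params ws" using less.prems lS by (intro params_W) auto
  qed (auto simp: finite_params G_inv_W G_meas e_def inj_on_def intro!: meas_if0 borel_measurable_diff)
  show ?case
  proof (cases "\<exists>k<ws ! l''. (A1 (Suc l'',k) = 1) \<noteq> (A2 (Suc l'',k) = 1)")
    case True
    then obtain k0 where k0: "k0 < ws ! l''" "(A1 (Suc l'',k0) = 1) \<noteq> (A2 (Suc l'',k0) = 1)" by blast
    have "AE \<theta> in Pi\<^sub>M (params ws :: 'n prm set) (\<lambda>_. lborel). e k0 \<theta> \<noteq> 0"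
    proof (cases "A1 (Suc l'',k0) = 1")
      case True
      then show ?thesis using G_nonzero[OF act1 lay, of k0 j] k0 by (simp add: e_def)
    next
      case False
      then show ?thesis using G_nonzero[OF act2 lay, of k0 j] k0 by (simp add: e_def)
    qed
    then show ?thesis using cK k0 eq by simp
  next
    case False
    obtain k0 where k0: "k0 < ws ! (Suc l'' - 1)" "A1 (Suc l'', k0) = 1" using active_pick[OF act1 lay] .
    then have k0': "k0 < ws ! l''" "A2 (Suc l'', k0) = 1" using False by auto
    have ex: "\<exists>m k. 1 \<le> m \<and> m < Suc l'' \<and> k < ws ! (m - 1) \<and> (A1 (m,k) = 1) \<noteq> (A2 (m,k) = 1)"
    proof -
      obtain m k where mk: "1 \<le> m" "m < l" "k < ws ! (m - 1)" "(A1 (m,k) = 1) \<noteq> (A2 (m,k) = 1)"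
        using less.prems by blast
      have "m \<noteq> Suc l''" using mk False by auto
      then show ?thesis using mk lS by (intro exI[of _ m] exI[of _ k]) auto
    qed
    have "AE \<theta> in Pi\<^sub>M (params ws :: 'n prm set) (\<lambda>_. lborel). e k0 \<theta> \<noteq> 0"
      using less.IH[of "Suc l''" k0] lS lay k0 k0' ex by (simp add: e_def)
    then show ?thesis using cK k0' eq by simp
  qed
qed

lemma gnet_diff:
  fixes j :: "'n::finite"
  assumes ne: "ws \<noteq> []" and act1: "active_every_layer ws A1" and act2: "active_every_layer ws A2"
    and dif: "\<exists>m k. 1 \<le> m \<and> m \<le> length ws \<and> k < ws ! (m - 1) \<and> (A1 (m,k) = 1) \<noteq> (A2 (m,k) = 1)"
  shows "AE \<theta> in Pi\<^sub>M (params ws :: 'n prm set) (\<lambda>_. lborel). gnet ws A1 \<theta> j - gnet ws A2 \<theta> j \<noteq> 0"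
proof -
  define L where "L = length ws"
  have lay: "1 \<le> L" "L \<le> length ws" using ne L_def by (auto simp: Suc_le_eq)
  define e where "e = (\<lambda>k (\<theta>::'n prm \<Rightarrow> real). (if A1 (L, k) = 1 then G ws A1 \<theta> L k j else 0)
       - (if A2 (L, k) = 1 then G ws A2 \<theta> L k j else 0))"
  have eq: "gnet ws A1 \<theta> j - gnet ws A2 \<theta> j = (\<Sum>k\<in>{..<ws ! (L - 1)}. \<theta> (Wout k) * e k \<theta>)" for \<theta>
    unfolding gnet_def e_def L_def by (simp add: sum_subtractf[symmetric] right_diff_distrib)
  have cK: "AE \<theta> in Pi\<^sub>M (params ws :: 'n prm set) (\<lambda>_. lborel). e k0 \<theta> \<noteq> 0 \<Longrightarrow> k0 < ws ! (L - 1) \<Longrightarrow>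
     AE \<theta> in Pi\<^sub>M (params ws :: 'n prm set) (\<lambda>_. lborel). (\<Sum>k\<in>{..<ws ! (L - 1)}. \<theta> (Wout k) * e k \<theta>) \<noteq> 0" for k0
  proof (rule key_sum[where kz=k0])
    assume "k0 < ws ! (L - 1)"
    then show "Wout k0 \<in> params ws" unfolding L_def by (rule params_Wout)
  qed (auto simp: finite_params G_inv_Wout G_meas e_def inj_on_def intro!: meas_if0 borel_measurable_diff)
  show ?thesis
  proof (cases "\<exists>k<ws ! (L - 1). (A1 (L,k) = 1) \<noteq> (A2 (L,k) = 1)")
    case True
    then obtain k0 where k0: "k0 < ws ! (L - 1)" "(A1 (L,k0) = 1) \<noteq> (A2 (L,k0) = 1)" by blast
    have "AE \<theta> in Pi\<^sub>M (params ws :: 'n prm set) (\<lambda>_. lborel). e k0 \<theta> \<noteq> 0"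
    proof (cases "A1 (L,k0) = 1")
      case True
      then show ?thesis using G_nonzero[OF act1 lay, of k0 j] k0 by (simp add: e_def)
    next
      case False
      then show ?thesis using G_nonzero[OF act2 lay, of k0 j] k0 by (simp add: e_def)
    qed
    then show ?thesis using cK k0 eq by simp
  next
    case False
    obtain k0 where k0: "k0 < ws ! (L - 1)" "A1 (L, k0) = 1" using active_pick[OF act1 lay] .
    then have k0': "A2 (L, k0) = 1" using False by auto
    have ex: "\<exists>m k. 1 \<le> m \<and> m < L \<and> k < ws ! (m - 1) \<and> (A1 (m,k) = 1) \<noteq> (A2 (m,k) = 1)"
    proof -
      obtain m k where mk: "1 \<le> m" "m \<le> L" "k < ws ! (m - 1)" "(A1 (m,k) = 1) \<noteq> (A2 (m,k) = 1)"
        using dif L_def by blast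
      have "m \<noteq> L" using mk False by auto
      then show ?thesis using mk by (intro exI[of _ m] exI[of _ k]) auto
    qed
    have "AE \<theta> in Pi\<^sub>M (params ws :: 'n prm set) (\<lambda>_. lborel). e k0 \<theta> \<noteq> 0"
      using G_diff[OF act1 act2 lay k0(1) ex, of j] k0 k0' by (simp add: e_def)
    then show ?thesis using cK k0 eq by simp
  qed
qed




theorem mainTheorem9:
  fixes ws :: "nat list"
  assumes "ws \<noteq> []" and "\<forall>w\<in>set ws. 0 < w"
  shows "AE \<theta> in (\<Pi>\<^sub>M p\<in>(params ws :: ('n::finite) prm set). lborel).
           \<forall>A1 A2. A1 \<in> patterns ws \<and> A2 \<in> patterns ws \<and> A1 \<noteq> A2
              \<and> region ws \<theta> A1 \<noteq> {} \<and> region ws \<theta> A2 \<noteq> {}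
              \<and> active_every_layer ws A1 \<and> active_every_layer ws A2
              \<longrightarrow> (\<exists>g1 g2. g1 \<noteq> g2
                     \<and> (\<forall>x\<in>region ws \<theta> A1. GDERIV (net ws \<theta>) x :> g1)
                     \<and> (\<forall>x\<in>region ws \<theta> A2. GDERIV (net ws \<theta>) x :> g2))"
proof -
  let ?M = "\<Pi>\<^sub>M p\<in>(params ws :: 'n prm set). lborel"
  define j0 :: 'n where "j0 = undefined"
  let ?S = "{(A1, A2). A1 \<in> patterns ws \<and> A2 \<in> patterns ws \<and> A1 \<noteq> A2
              \<and> active_every_layer ws A1 \<and> active_every_layer ws A2}"
  have finS: "finite ?S"
  proof -
    have "finite (patterns ws)" unfolding patterns_def by (intro finite_PiE finite_neurons) auto
    moreover have "?S \<subseteq> patterns ws \<times> patterns ws" by auto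
    ultimately show ?thesis by (meson finite_SigmaI finite_subset)
  qed
  have each: "AE \<theta> in ?M. gnet ws A1 \<theta> j0 - gnet ws A2 \<theta> j0 \<noteq> 0" if "(A1, A2) \<in> ?S" for A1 A2
  proof -
    have A: "A1 \<in> patterns ws" "A2 \<in> patterns ws" "A1 \<noteq> A2" "active_every_layer ws A1" "active_every_layer ws A2"
      using that by auto
    obtain n where n: "n \<in> neurons ws" "A1 n \<noteq> A2 n"
      using A(1-3) PiE_ext unfolding patterns_def by metis
    have "A1 n \<in> {-1, 1}" "A2 n \<in> {-1, 1}" using A(1,2) n(1) unfolding patterns_def by auto
    then have "(A1 n = 1) \<noteq> (A2 n = 1)" using n(2) by auto
    moreover obtain m k where "n = (m, k)" by (cases n)
    ultimately have "\<exists>m k. 1 \<le> m \<and> m \<le> length ws \<and> k < ws ! (m - 1) \<and> (A1 (m,k) = 1) \<noteq> (A2 (m,k) = 1)"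
      using n(1) unfolding neurons_def by auto
    then show ?thesis using gnet_diff[OF assms(1) A(4,5), of j0] by simp
  qed
  have "AE \<theta> in ?M. \<forall>p\<in>?S. gnet ws (fst p) \<theta> j0 - gnet ws (snd p) \<theta> j0 \<noteq> 0"
    using finS each by (intro eventually_ball_finite) auto
  then show ?thesis
  proof (rule eventually_mono)
    fix \<theta> :: "'n prm \<Rightarrow> real"
    assume H: "\<forall>p\<in>?S. gnet ws (fst p) \<theta> j0 - gnet ws (snd p) \<theta> j0 \<noteq> 0"
    show "\<forall>A1 A2. A1 \<in> patterns ws \<and> A2 \<in> patterns ws \<and> A1 \<noteq> A2
              \<and> region ws \<theta> A1 \<noteq> {} \<and> region ws \<theta> A2 \<noteq> {}
              \<and> active_every_layer ws A1 \<and> active_every_layer ws A2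
              \<longrightarrow> (\<exists>g1 g2. g1 \<noteq> g2
                     \<and> (\<forall>x\<in>region ws \<theta> A1. GDERIV (net ws \<theta>) x :> g1)
                     \<and> (\<forall>x\<in>region ws \<theta> A2. GDERIV (net ws \<theta>) x :> g2))"
    proof (intro allI impI)
      fix A1 A2
      assume C: "A1 \<in> patterns ws \<and> A2 \<in> patterns ws \<and> A1 \<noteq> A2
              \<and> region ws \<theta> A1 \<noteq> {} \<and> region ws \<theta> A2 \<noteq> {}
              \<and> active_every_layer ws A1 \<and> active_every_layer ws A2"
      then have "gnet ws A1 \<theta> j0 - gnet ws A2 \<theta> j0 \<noteq> 0" using H by force
      then have ne: "(\<chi> j. gnet ws A1 \<theta> j) \<noteq> (\<chi> j. gnet ws A2 \<theta> j)"
        by (metis eq_iff_diff_eq_0 vec_lambda_beta)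
      show "\<exists>g1 g2. g1 \<noteq> g2
                     \<and> (\<forall>x\<in>region ws \<theta> A1. GDERIV (net ws \<theta>) x :> g1)
                     \<and> (\<forall>x\<in>region ws \<theta> A2. GDERIV (net ws \<theta>) x :> g2)"
        using ne net_deriv[OF _ _ assms(1)] C by blast
    qed
  qed
qed


end
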